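(* Let $q\in X^*\setminus\{e\}$ and let $\lambda_q$ be the largest positive real root of the polynomial $\mathfrak{p}_q(t):=t^{|q|}-\sum_{v\in\sqrt[*]{P_q}}t^{|q|-|v|}$. Then there are constants $c_{q,1},c_{q,2}>0$ such that for all $n\in\mathbb{N}$, $$c_{q,1}\lambda_q^n\le|\mathrm{infix}(Q_q)\cap X^n|\le c_{q,2}\lambda_q^n.$$
   Context: $X$ is a finite alphabet with $|X|\ge2$; $X^*$ the finite words (empty word $e$), $X^n$ the words of length $n$. $w\sqsubseteq\eta$ means $w$ is a prefix of $\eta$, $w\sqsubset\eta$ a proper prefix. $\mathrm{infix}(B)$ is the set of all finite factors (subwords) of words in $B$. A finite word $\eta$ is quasiperiodic with quasiperiod $q$ if for every natural number $j<|\eta|$ there is a prefix $u_j\sqsubseteq\eta$ with $j-|q|<|u_j|\le j$ and $u_j\cdot q\sqsubseteq\eta$; $Q_q$ is the set of such words (including $e$). $P_q:=\{v: e\sqsubset v\sqsubseteq q\sqsubset v\cdot q\}$, and $\sqrt[*]{P_q}:=P_q\setminus(P_q^2\cdot P_q^* )$ is its star root (elements of $P_q$ not a concatenation of two or more elements of $P_q$). *)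

theory Defs
  imports Main "HOL-Library.Sublist" "HOL-Computational_Algebra.Polynomial"
begin

text \<open>Words are lists; the alphabet is a finite set X. Prefix = Sublist.prefix,
  factor (infix) = Sublist.sublist (contiguous).\<close>

definition words_of_len :: "'a set \<Rightarrow> nat \<Rightarrow> 'a list set" where
  "words_of_len X n = {w \<in> lists X. length w = n}"

definition quasiperiodic_words :: "'a set \<Rightarrow> 'a list \<Rightarrow> 'a list set" where
  "quasiperiodic_words X q = {\<eta> \<in> lists X. \<forall>j < length \<eta>. \<exists>u. prefix u \<eta> \<and>
       j < length u + length q \<and> length u \<le> j \<and> prefix (u @ q) \<eta>}"

definition P_set :: "'a list \<Rightarrow> 'a list set" where
  "P_set q = {v. strict_prefix [] v \<and> prefix v q \<and> strict_prefix q (v @ q)}"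

definition lang_conc :: "'a list set \<Rightarrow> 'a list set \<Rightarrow> 'a list set" where
  "lang_conc A B = {u @ v | u v. u \<in> A \<and> v \<in> B}"

definition lang_star :: "'a list set \<Rightarrow> 'a list set" where
  "lang_star A = {concat ws | ws. set ws \<subseteq> A}"

definition star_root :: "'a list set \<Rightarrow> 'a list set" where
  "star_root A = A - lang_conc (lang_conc A A) (lang_star A)"

definition infixes :: "'a list set \<Rightarrow> 'a list set" where
  "infixes B = {w. \<exists>\<eta>\<in>B. sublist w \<eta>}"

definition char_poly :: "'a list \<Rightarrow> real poly" where
  "char_poly q = monom 1 (length q) - (\<Sum>v\<in>star_root (P_set q). monom 1 (length q - length v))"

end

theory Submission
  imports Defs Complex_Main
begin


lemma P_memD:
  assumes "v \<in> P_set q"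
  shows "v \<noteq> [] \<and> prefix v q \<and> prefix q (v @ q)"
  using assms unfolding P_set_def
  by (auto simp: strict_prefix_def)

lemma P_memI:
  assumes "v \<noteq> []" "prefix v q" "prefix q (v @ q)"
  shows "v \<in> P_set q"
  using assms unfolding P_set_def strict_prefix_def
  by (auto simp: Sublist.prefix_Nil)

lemma R_sub_P: "star_root A \<subseteq> A"
  unfolding star_root_def by auto

lemma P_finite: "finite (P_set q)"
proof -
  have "P_set q \<subseteq> set (prefixes q)" by (auto dest: P_memD)
  thus ?thesis using finite_subset by blast
qed

lemma prefix_concat_q:
  assumes "set vs \<subseteq> P_set q"
  shows "prefix q (concat vs @ q)"
  using assms
proof (induction vs)
  case Nil then show ?case by simp
next
  case (Cons v vs)
  then have h: "prefix q (concat vs @ q)" by simp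
  have "prefix q (v @ q)" using Cons.prems P_memD by auto
  moreover have "prefix (v @ q) (v @ concat vs @ q)" using h by simp
  ultimately show ?case by (auto intro: prefix_order.trans)
qed

lemma P_from_occ:
  assumes pq: "prefix q s" and pd: "prefix q (drop k s)" and k: "0 < k" "k \<le> length q"
  shows "take k s \<in> P_set q"
proof (rule P_memI)
  have ls: "length q \<le> length s" using pq prefix_length_le by blast
  show "take k s \<noteq> []" using k ls by auto
  have "take k s = take k q" using pq k
    by (auto simp: prefix_def)
  then show "prefix (take k s) q" by (simp add: take_is_prefix)
  have "prefix (take k s @ q) (take k s @ drop k s)" using pd by (simp only: same_prefix_prefix)
  then have "prefix (take k s @ q) s" by simp
  then show "prefix q (take k s @ q)" using pq prefix_length_prefix by fastforce
qed

lemma lang_star_Cons: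
  "x \<in> A \<Longrightarrow> y \<in> lang_star A \<Longrightarrow> x @ y \<in> lang_star A"
proof -
  assume "x \<in> A" "y \<in> lang_star A"
  then obtain ws where "set ws \<subseteq> A" "y = concat ws" unfolding lang_star_def by auto
  then show ?thesis using \<open>x \<in> A\<close> unfolding lang_star_def
    by (auto intro!: exI[of _ "x # ws"])
qed

lemma lang_star_Nil: "[] \<in> lang_star A"
  unfolding lang_star_def by (auto intro!: exI[of _ "[]"])




lemma code_aux:
  assumes us: "set us \<subseteq> star_root (P_set q)" and ws: "set ws \<subseteq> star_root (P_set q)"
    and eq: "concat us @ q = concat ws @ q"
  shows "us = ws"
  using us ws eq
proof (induction us arbitrary: ws)
  case Nil
  then have "concat ws = []" by simp
  moreover have "\<forall>w\<in>set ws. w \<noteq> []" using Nil.prems(2) R_sub_P P_memD by blast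
  ultimately show ?case by simp
next
  case (Cons u us)
  have Pu: "u \<in> P_set q" using Cons.prems(1) R_sub_P by auto
  have unn: "u \<noteq> []" using Pu P_memD by blast
  obtain w ws' where wws: "ws = w # ws'"
    using Cons.prems(3) unn by (cases ws) auto
  have Pw: "w \<in> P_set q" using Cons.prems(2) wws R_sub_P by auto
  have Ru: "u \<in> star_root (P_set q)" using Cons.prems(1) by auto
  have Rw: "w \<in> star_root (P_set q)" using Cons.prems(2) wws by auto
  define s where "s = concat (u # us) @ q"
  have s1: "s = u @ (concat us @ q)" unfolding s_def by simp
  have s2: "s = w @ (concat ws' @ q)" using Cons.prems(3) wws unfolding s_def by simp
  have occ_u: "prefix q (concat us @ q)" using Cons.prems(1) R_sub_P
    by (intro prefix_concat_q) auto
  have occ_w: "prefix q (concat ws' @ q)" using Cons.prems(2) wws R_sub_P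
    by (intro prefix_concat_q) auto
  have lu: "length u \<le> length q" using Pu P_memD prefix_length_le by blast
  have lw: "length w \<le> length q" using Pw P_memD prefix_length_le by blast
  have key: False if lt: "length a < length b" and Ra: "a \<in> P_set q" and Rb: "b \<in> star_root (P_set q)"
    and sa: "s = a @ ta" and sb: "s = b @ tb" and oa: "prefix q ta" and ob: "prefix q tb"
    and lb: "length b \<le> length q" for a b ta tb
  proof -
    have k: "0 < length b - length a" "length b - length a \<le> length q" using lt lb by auto
    have d: "drop (length b - length a) ta = tb"
    proof -
      have "drop (length b) s = tb" using sb by simp
      moreover have "drop (length b) s = drop (length b - length a) ta" using sa lt by simp
      ultimately show ?thesis by simp
    qed
    have z: "take (length b - length a) ta \<in> P_set q"
      using P_from_occ[OF oa _ k] d ob by simp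
    have bz: "b = a @ take (length b - length a) ta"
    proof -
      have "take (length b) s = b" using sb by simp
      moreover have "take (length b) s = a @ take (length b - length a) ta" using sa lt by simp
      ultimately show ?thesis by simp
    qed
    have "b \<in> lang_conc (lang_conc (P_set q) (P_set q)) (lang_star (P_set q))"
      unfolding lang_conc_def using bz Ra z lang_star_Nil
      by (smt (verit) append.right_neutral mem_Collect_eq)
    then show False using Rb unfolding star_root_def by auto
  qed
  have "length u = length w"
  proof (rule ccontr)
    assume "length u \<noteq> length w"
    then consider "length u < length w" | "length w < length u" by linarith
    then show False
    proof cases
      case 1 then show False using key[OF 1 Pu Rw s1 s2 occ_u occ_w lw] by blast
    next
      case 2 then show False using key[OF 2 Pw Ru s2 s1 occ_w occ_u lu] by blast
    qed
  qed
  then have uw: "u = w" using s1 s2 by (metis append_eq_append_conv)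
  then have "concat us @ q = concat ws' @ q" using s1 s2 by simp
  moreover have "set us \<subseteq> star_root (P_set q)" using Cons.prems(1) by simp
  moreover have "set ws' \<subseteq> star_root (P_set q)" using Cons.prems(2) wws by simp
  ultimately have "us = ws'" using Cons.IH by blast
  then show ?case using uw wws by simp
qed

lemma code:
  assumes "set us \<subseteq> star_root (P_set q)" "set ws \<subseteq> star_root (P_set q)"
    and "concat us = concat ws"
  shows "us = ws"
  using code_aux assms by auto




lemma lang_star_append:
  "x \<in> lang_star A \<Longrightarrow> y \<in> lang_star A \<Longrightarrow> x @ y \<in> lang_star A"
proof -
  assume "x \<in> lang_star A" "y \<in> lang_star A"
  then obtain ws1 ws2 where "set ws1 \<subseteq> A" "x = concat ws1" "set ws2 \<subseteq> A" "y = concat ws2"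
    unfolding lang_star_def by auto
  then show ?thesis unfolding lang_star_def by (auto intro!: exI[of _ "ws1 @ ws2"])
qed

lemma lang_star_concat:
  "\<forall>x\<in>set xs. x \<in> lang_star A \<Longrightarrow> concat xs \<in> lang_star A"
  by (induction xs) (auto intro: lang_star_append lang_star_Nil)

lemma lang_star_single: "x \<in> A \<Longrightarrow> x \<in> lang_star A"
  using lang_star_Cons[OF _ lang_star_Nil, of x A] by simp

lemma P_in_Rstar:
  fixes v :: "'a list"
  shows "v \<in> P_set q \<Longrightarrow> v \<in> lang_star (star_root (P_set q))"
proof (induction "length v" arbitrary: v rule: less_induct)
  case less
  show ?case
  proof (cases "v \<in> star_root (P_set q)")
    case True then show ?thesis by (rule lang_star_single)
  next
    case False
    then have "v \<in> lang_conc (lang_conc (P_set q) (P_set q)) (lang_star (P_set q))"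
      using less.prems unfolding star_root_def by auto
    then obtain a b cs where v: "v = a @ b @ concat cs" and a: "a \<in> P_set q" and b: "b \<in> P_set q"
      and cs: "set cs \<subseteq> P_set q"
      unfolding lang_conc_def lang_star_def by auto
    have an: "a \<noteq> []" and bn: "b \<noteq> []" using a b P_memD by auto
    have "a \<in> lang_star (star_root (P_set q))"
      using less.hyps[OF _ a] v bn by simp
    moreover have "b \<in> lang_star (star_root (P_set q))"
      using less.hyps[OF _ b] v an by simp
    moreover have "\<forall>x\<in>set cs. x \<in> lang_star (star_root (P_set q))"
    proof
      fix x assume x: "x \<in> set cs"
      have "length x \<le> length (concat cs)"
        using x by (induction cs) auto
      then have "length x < length v" using v an by (cases a) auto
      then show "x \<in> lang_star (star_root (P_set q))" using less.hyps x cs by blast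
    qed
    ultimately show ?thesis using v by (auto intro!: lang_star_append lang_star_concat)
  qed
qed

lemma Pstar_sub_Rstar: "lang_star (P_set q) \<subseteq> lang_star (star_root (P_set q))"
proof
  fix x assume "x \<in> lang_star (P_set q)"
  then obtain ws where "set ws \<subseteq> P_set q" "x = concat ws" unfolding lang_star_def by auto
  then show "x \<in> lang_star (star_root (P_set q))"
    using P_in_Rstar by (auto intro!: lang_star_concat)
qed

definition QP :: "'a list \<Rightarrow> 'a list \<Rightarrow> bool" where
  "QP q \<eta> \<longleftrightarrow> (\<forall>j < length \<eta>. \<exists>u. prefix u \<eta> \<and>
       j < length u + length q \<and> length u \<le> j \<and> prefix (u @ q) \<eta>)"

lemma QP_concat:
  assumes "set vs \<subseteq> P_set q"
  shows "QP q (concat vs @ q)"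
  using assms
proof (induction vs)
  case Nil
  show ?case unfolding QP_def by (auto intro!: exI[of _ "[]"])
next
  case (Cons v vs)
  have IH: "QP q (concat vs @ q)" using Cons by simp
  have Pv: "v \<in> P_set q" using Cons.prems by simp
  have lv: "length v \<le> length q" using Pv P_memD prefix_length_le by blast
  have pq: "prefix q (concat (v # vs) @ q)" using Cons.prems by (intro prefix_concat_q)
  show ?case unfolding QP_def
  proof (intro allI impI)
    fix j assume j: "j < length (concat (v # vs) @ q)"
    show "\<exists>u. prefix u (concat (v # vs) @ q) \<and> j < length u + length q \<and> length u \<le> j \<and>
             prefix (u @ q) (concat (v # vs) @ q)"
    proof (cases "j < length v")
      case True
      then show ?thesis using pq lv by (auto intro!: exI[of _ "[]"])
    next
      case False
      then have "j - length v < length (concat vs @ q)" using j by simp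
      then obtain u where u: "prefix u (concat vs @ q)" "j - length v < length u + length q"
        "length u \<le> j - length v" "prefix (u @ q) (concat vs @ q)"
        using IH unfolding QP_def by blast
      show ?thesis
        apply (rule exI[of _ "v @ u"])
        using u False by auto
    qed
  qed
qed

lemma QP_of: "\<eta> \<in> quasiperiodic_words X q \<Longrightarrow> QP q \<eta>"
  unfolding quasiperiodic_words_def QP_def by auto

lemma Q_intro: "set vs \<subseteq> P_set q \<Longrightarrow> concat vs @ q \<in> lists X \<Longrightarrow> concat vs @ q \<in> quasiperiodic_words X q"
  using QP_concat unfolding quasiperiodic_words_def QP_def by blast

lemma chain:
  assumes Q: "QP q \<eta>" and o1: "prefix q (drop p1 \<eta>)" and o2: "prefix q (drop p2 \<eta>)"
    and le: "p1 \<le> p2" and qn: "q \<noteq> []"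
  shows "drop p1 (take p2 \<eta>) \<in> lang_star (P_set q)"
  using o1 le
proof (induction "p2 - p1" arbitrary: p1 rule: less_induct)
  case less
  have "length q \<le> length \<eta> - p2" using prefix_length_le[OF o2] by simp
  then have l2: "p2 + length q \<le> length \<eta>" using qn by (cases q) auto
  show ?case
  proof (cases "p2 - p1 \<le> length q")
    case True
    show ?thesis
    proof (cases "p1 = p2")
      case True then show ?thesis using lang_star_Nil by simp
    next
      case False
      have "take (p2 - p1) (drop p1 \<eta>) \<in> P_set q"
        using P_from_occ[OF less.prems(1), of "p2 - p1"] o2 False less.prems(2) True
        by (simp add: add.commute)
      then show ?thesis using lang_star_single by (simp add: take_drop less.prems(2))
    qed
  next
    case False
    have "p1 + length q < length \<eta>" using False l2 by linarith
    then obtain u where u: "p1 + length q < length u + length q" "length u \<le> p1 + length q"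
      "prefix (u @ q) \<eta>"
      using Q unfolding QP_def by blast
    define p where "p = length u"
    have op: "prefix q (drop p \<eta>)" using u(3) unfolding p_def prefix_def by auto
    have pp1: "p1 < p" "p \<le> p1 + length q" "p < p2" using u False unfolding p_def by auto
    have rest: "drop p (take p2 \<eta>) \<in> lang_star (P_set q)"
      using less.hyps[of p] op pp1 less.prems by auto
    have "take (p - p1) (drop p1 \<eta>) \<in> P_set q"
      using P_from_occ[OF less.prems(1), of "p - p1"] op pp1 by (simp add: add.commute)
    then have first: "drop p1 (take p \<eta>) \<in> P_set q" by (simp add: take_drop pp1 less_imp_le)
    have "drop p1 (take p2 \<eta>) = drop p1 (take p \<eta>) @ drop p (take p2 \<eta>)"
    proof -
      have "take p2 \<eta> = take p (take p2 \<eta>) @ drop p (take p2 \<eta>)" by (rule append_take_drop_id[symmetric])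
      also have "take p (take p2 \<eta>) = take p \<eta>" using pp1 by simp
      finally have e: "take p2 \<eta> = take p \<eta> @ drop p (take p2 \<eta>)" .
      have "length (take p \<eta>) = p" using pp1 l2 by simp
      then show ?thesis using pp1 by (subst e) simp
    qed
    then show ?thesis using first rest lang_star_Cons by metis
  qed
qed




locale renewal =
  fixes R :: "'b set" and l :: "'b \<Rightarrow> nat" and M :: nat and mu :: real and a :: "nat \<Rightarrow> real"
  assumes finR: "finite R"
    and lpos: "\<And>v. v \<in> R \<Longrightarrow> 1 \<le> l v"
    and lM: "\<And>v. v \<in> R \<Longrightarrow> l v \<le> M"
    and mupos: "mu > 0"
    and musum: "(\<Sum>v\<in>R. mu ^ l v) = 1"
    and a0: "a 0 = 1"
    and aS: "\<And>n. a (Suc n) = (\<Sum>v\<in>R. if l v \<le> Suc n then a (Suc n - l v) else 0)"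
    and anonneg: "\<And>n. a n \<ge> 0"
begin

definition Phi :: "nat \<Rightarrow> real" where
  "Phi n = (\<Sum>j\<le>n. \<Sum>v\<in>R. if n < j + l v then a j * mu ^ (j + l v) else 0)"

lemma Phi_1: "Phi n = 1"
proof (induction n)
  case 0
  have "\<And>v. v \<in> R \<Longrightarrow> (if 0 < l v then a 0 * mu ^ (0 + l v) else 0) = a 0 * mu ^ l v"
    using lpos by (simp add: Suc_le_eq)
  then have "Phi 0 = (\<Sum>v\<in>R. a 0 * mu ^ (l v))" unfolding Phi_def by (simp cong: sum.cong)
  also have "\<dots> = 1" using a0 musum by simp
  finally show ?case .
next
  case (Suc n)
  define X where "X j v = a j * mu ^ (j + l v)" for j v
  have split: "Phi n = (\<Sum>j\<le>n. \<Sum>v\<in>R. if Suc n < j + l v then X j v else 0)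
      + (\<Sum>j\<le>n. \<Sum>v\<in>R. if j + l v = Suc n then X j v else 0)"
    unfolding Phi_def X_def sum.distrib[symmetric]
    by (intro sum.cong refl) auto
  have "(\<Sum>j\<le>n. \<Sum>v\<in>R. if j + l v = Suc n then X j v else 0)
      = (\<Sum>v\<in>R. \<Sum>j\<le>n. if j + l v = Suc n then X j v else 0)"
    by (rule sum.swap)
  also have "\<dots> = (\<Sum>v\<in>R. if l v \<le> Suc n then a (Suc n - l v) * mu ^ Suc n else 0)"
  proof (intro sum.cong refl)
    fix v assume v: "v \<in> R"
    have lv: "1 \<le> l v" using lpos v by simp
    show "(\<Sum>j\<le>n. if j + l v = Suc n then X j v else 0) =
        (if l v \<le> Suc n then a (Suc n - l v) * mu ^ Suc n else 0)"
    proof (cases "l v \<le> Suc n")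
      case True
      have "(\<Sum>j\<le>n. if j + l v = Suc n then X j v else 0) =
          (\<Sum>j\<le>n. if j = Suc n - l v then X j v else 0)"
        using True by (intro sum.cong refl) auto
      also have "\<dots> = X (Suc n - l v) v"
      proof -
        have "Suc n - l v \<le> n" using lv True by linarith
        then show ?thesis by (simp add: sum.delta)
      qed
      also have "\<dots> = a (Suc n - l v) * mu ^ Suc n" unfolding X_def using True by simp
      finally show ?thesis using True by simp
    next
      case False
      then show ?thesis by (intro trans[OF sum.neutral]) auto
    qed
  qed
  also have "\<dots> = a (Suc n) * mu ^ Suc n"
    unfolding aS sum_distrib_right by (intro sum.cong refl) auto
  finally have s2: "(\<Sum>j\<le>n. \<Sum>v\<in>R. if j + l v = Suc n then X j v else 0) = a (Suc n) * mu ^ Suc n" .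
  have "Phi (Suc n) = (\<Sum>j\<le>n. \<Sum>v\<in>R. if Suc n < j + l v then X j v else 0)
       + (\<Sum>v\<in>R. if Suc n < Suc n + l v then X (Suc n) v else 0)"
    unfolding Phi_def X_def by simp
  also have "(\<Sum>v\<in>R. if Suc n < Suc n + l v then X (Suc n) v else 0) = (\<Sum>v\<in>R. a (Suc n) * mu ^ Suc n * mu ^ l v)"
    unfolding X_def by (intro sum.cong refl) (force simp: power_add dest: lpos)
  also have "\<dots> = a (Suc n) * mu ^ Suc n"
    unfolding sum_distrib_left[symmetric] musum by simp
  finally show ?case using split s2 Suc.IH by simp
qed

lemma a_upper: "a n * mu ^ n \<le> 1"
proof -
  have "(\<Sum>v\<in>R. if n < n + l v then a n * mu ^ (n + l v) else 0) = (\<Sum>v\<in>R. a n * mu ^ n * mu ^ l v)"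
    by (intro sum.cong refl) (use lpos in \<open>force simp: power_add\<close>)
  also have "\<dots> = a n * mu ^ n" by (simp add: sum_distrib_left[symmetric] musum)
  finally have "a n * mu ^ n = (\<Sum>v\<in>R. if n < n + l v then a n * mu ^ (n + l v) else 0)" by simp
  also have "\<dots> \<le> Phi n" unfolding Phi_def
    by (rule member_le_sum) (auto intro!: sum_nonneg simp: anonneg mupos less_imp_le)
  finally show ?thesis using Phi_1 by simp
qed

lemma a_lower:
  assumes M1: "1 \<le> M"
  shows "\<exists>j\<le>n. n < j + M \<and> 1 / real M \<le> a j * mu ^ j"
proof (rule ccontr)
  assume "\<not> ?thesis"
  then have small: "\<And>j. j \<le> n \<Longrightarrow> n < j + M \<Longrightarrow> a j * mu ^ j < 1 / real M" by force
  define g where "g j = (if n < j + M then a j * mu ^ j else 0)" for j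
  define h where "h j = (if n < j + M then 1 / real M else 0)" for j
  have "1 = Phi n" using Phi_1 by simp
  also have "\<dots> \<le> (\<Sum>j\<le>n. g j)" unfolding Phi_def
  proof (rule sum_mono)
    fix j assume j: "j \<in> {..n}"
    have "(\<Sum>v\<in>R. if n < j + l v then a j * mu ^ (j + l v) else 0)
        \<le> (\<Sum>v\<in>R. if n < j + M then a j * mu ^ j * mu ^ l v else 0)"
    proof (rule sum_mono)
      fix v assume v: "v \<in> R"
      show "(if n < j + l v then a j * mu ^ (j + l v) else 0) \<le> (if n < j + M then a j * mu ^ j * mu ^ l v else 0)"
        using lM[OF v] anonneg[of j] mupos by (auto simp: power_add)
    qed
    also have "\<dots> = g j" unfolding g_def
      by (auto simp: sum_distrib_left[symmetric] musum)
    finally show "(\<Sum>v\<in>R. if n < j + l v then a j * mu ^ (j + l v) else 0) \<le> g j" .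
  qed
  also have "\<dots> < (\<Sum>j\<le>n. h j)"
  proof (rule sum_strict_mono_ex1)
    show "finite {..n}" by simp
    show "\<forall>x\<in>{..n}. g x \<le> h x" unfolding g_def h_def using small by (auto intro: less_imp_le)
    show "\<exists>x\<in>{..n}. g x < h x" unfolding g_def h_def using small[of n] M1
      by (intro bexI[of _ n]) auto
  qed
  also have "\<dots> \<le> 1"
  proof -
    have "(\<Sum>j\<le>n. h j) = (\<Sum>j\<in>{j\<in>{..n}. n < j + M}. 1 / real M)"
      unfolding h_def by (rule sum.inter_filter[symmetric]) simp
    also have "\<dots> = real (card {j\<in>{..n}. n < j + M}) / real M" by simp
    also have "card {j\<in>{..n}. n < j + M} \<le> M"
    proof -
      have "{j\<in>{..n}. n < j + M} \<subseteq> {Suc n - M..n}" by auto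
      then have "card {j\<in>{..n}. n < j + M} \<le> card {Suc n - M..n}" by (intro card_mono) auto
      also have "\<dots> \<le> M" by simp
      finally show ?thesis .
    qed
    then have "real (card {j\<in>{..n}. n < j + M}) / real M \<le> 1" using M1
      by (simp add: divide_le_eq_1)
    finally show ?thesis .
  qed
  finally show False by simp
qed

end




definition seqs :: "'a list set \<Rightarrow> nat \<Rightarrow> 'a list list set" where
  "seqs R L = {ws. set ws \<subseteq> R \<and> sum_list (map length ws) = L}"

lemma seqs_finite:
  assumes "finite R" "\<forall>v\<in>R. v \<noteq> []"
  shows "finite (seqs R L)"
proof -
  have "\<And>ws. set ws \<subseteq> R \<Longrightarrow> length ws \<le> sum_list (map length ws)"
  proof -
    fix ws :: "'a list list" assume "set ws \<subseteq> R"
    then show "length ws \<le> sum_list (map length ws)"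
    proof (induction ws)
      case Nil then show ?case by simp
    next
      case (Cons a ws)
      then have "a \<noteq> []" using assms(2) by auto
      then have "0 < length a" by simp
      moreover have "length ws \<le> sum_list (map length ws)" using Cons by auto
      ultimately show ?case by (simp only: list.map sum_list.Cons length_Cons)
    qed
  qed
  then have "seqs R L \<subseteq> {ws. set ws \<subseteq> R \<and> length ws \<le> L}" unfolding seqs_def by force
  then show ?thesis using finite_lists_length_le[OF assms(1)] finite_subset by blast
qed

lemma seqs_0:
  assumes "\<forall>v\<in>R. v \<noteq> []"
  shows "seqs R 0 = {[]}"
proof -
  have "\<And>ws. set ws \<subseteq> R \<Longrightarrow> sum_list (map length ws) = 0 \<Longrightarrow> ws = []"
  proof -
    fix ws :: "'a list list" assume "set ws \<subseteq> R" "sum_list (map length ws) = 0"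
    then show "ws = []" using assms by (cases ws) auto
  qed
  then show ?thesis unfolding seqs_def by auto
qed

lemma seqs_Suc:
  "seqs R (Suc n) = (\<Union>v\<in>R. if length v \<le> Suc n then (\<lambda>ws. v # ws) ` seqs R (Suc n - length v) else {})"
proof (rule set_eqI)
  fix ws
  show "ws \<in> seqs R (Suc n) \<longleftrightarrow> ws \<in> (\<Union>v\<in>R. if length v \<le> Suc n then (\<lambda>ws. v # ws) ` seqs R (Suc n - length v) else {})"
  proof (cases ws)
    case Nil then show ?thesis unfolding seqs_def by auto
  next
    case (Cons v ws')
    show ?thesis
    proof
      assume "ws \<in> seqs R (Suc n)"
      then have "v \<in> R" "set ws' \<subseteq> R" "length v + sum_list (map length ws') = Suc n"
        using Cons unfolding seqs_def by auto
      then show "ws \<in> (\<Union>v\<in>R. if length v \<le> Suc n then (\<lambda>ws. v # ws) ` seqs R (Suc n - length v) else {})"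
        using Cons unfolding seqs_def by (intro UN_I[of v]) auto
    next
      assume "ws \<in> (\<Union>v\<in>R. if length v \<le> Suc n then (\<lambda>ws. v # ws) ` seqs R (Suc n - length v) else {})"
      then show "ws \<in> seqs R (Suc n)" unfolding seqs_def by (auto split: if_splits)
    qed
  qed
qed

lemma card_seqs_Suc:
  assumes "finite R" "\<forall>v\<in>R. v \<noteq> []"
  shows "real (card (seqs R (Suc n))) =
    (\<Sum>v\<in>R. if length v \<le> Suc n then real (card (seqs R (Suc n - length v))) else 0)"
proof -
  have "card (seqs R (Suc n)) = (\<Sum>v\<in>R. card (if length v \<le> Suc n then (\<lambda>ws. v # ws) ` seqs R (Suc n - length v) else {}))"
    unfolding seqs_Suc
    by (rule card_UN_disjoint) (use assms seqs_finite in auto)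
  also have "\<dots> = (\<Sum>v\<in>R. if length v \<le> Suc n then card (seqs R (Suc n - length v)) else 0)"
    by (intro sum.cong refl) (auto simp: card_image)
  finally show ?thesis by (simp add: of_nat_sum if_distrib cong: if_cong)
qed




lemma q_in_P: "q \<noteq> [] \<Longrightarrow> q \<in> P_set q"
  by (rule P_memI) auto

lemma P_lists: "q \<in> lists X \<Longrightarrow> v \<in> P_set q \<Longrightarrow> v \<in> lists X"
proof -
  assume "q \<in> lists X" "v \<in> P_set q"
  then obtain zs where "q = v @ zs" using P_memD[of v q] by (auto simp: prefix_def)
  then show ?thesis using \<open>q \<in> lists X\<close> by simp
qed

lemma R_props: "v \<in> star_root (P_set q) \<Longrightarrow> v \<noteq> [] \<and> length v \<le> length q"
  using R_sub_P P_memD prefix_length_le by blast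

lemma R_finite: "finite (star_root (P_set q))"
  using R_sub_P P_finite finite_subset by blast

lemma poly_part:
  assumes "poly (char_poly q) lam = 0" "lam > 0"
  shows "(\<Sum>v\<in>star_root (P_set q). (1 / lam) ^ length v) = 1"
proof -
  let ?R = "star_root (P_set q)"
  have "poly (char_poly q) lam = lam ^ length q - (\<Sum>v\<in>?R. lam ^ (length q - length v))"
    unfolding char_poly_def by (simp add: poly_monom poly_sum)
  then have e: "lam ^ length q = (\<Sum>v\<in>?R. lam ^ (length q - length v))" using assms by simp
  have "(\<Sum>v\<in>?R. (1 / lam) ^ length v) = (\<Sum>v\<in>?R. lam ^ (length q - length v) / lam ^ length q)"
  proof (intro sum.cong refl)
    fix v assume "v \<in> ?R"
    then have lv: "length v \<le> length q" using R_props by blast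
    have "lam ^ length q = lam ^ (length q - length v) * lam ^ length v"
      using lv by (simp add: power_add[symmetric])
    then show "(1 / lam) ^ length v = lam ^ (length q - length v) / lam ^ length q"
      using assms(2) by (simp add: power_one_over field_simps)
  qed
  also have "\<dots> = (\<Sum>v\<in>?R. lam ^ (length q - length v)) / lam ^ length q"
    by (simp add: sum_divide_distrib)
  also have "\<dots> = 1" using e assms(2) by (simp flip: e)
  finally show ?thesis .
qed

lemma lower_part:
  assumes X: "q \<in> lists X" and qn: "q \<noteq> []" and jn: "j \<le> n"
    and fin: "finite X"
  shows "card (seqs (star_root (P_set q)) j) \<le> card (infixes (quasiperiodic_words X q) \<inter> words_of_len X n)"
proof -
  let ?R = "star_root (P_set q)"
  define eta where "eta ws = concat (ws @ replicate n q) @ q" for ws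
  define F where "F ws = take n (eta ws)" for ws
  have finB: "finite (words_of_len X n)"
    unfolding words_of_len_def using finite_lists_length_eq[OF fin, of n]
    by (simp add: lists_eq_set)
  have "inj_on F (seqs ?R j)"
  proof (rule inj_onI)
    fix ws1 ws2 assume w1: "ws1 \<in> seqs ?R j" and w2: "ws2 \<in> seqs ?R j" and eq: "F ws1 = F ws2"
    have l1: "length (concat ws1) = j" and l2: "length (concat ws2) = j"
      using w1 w2 unfolding seqs_def by (auto simp: length_concat)
    have "take j (F ws1) = concat ws1" unfolding F_def eta_def using l1 jn by simp
    moreover have "take j (F ws2) = concat ws2" unfolding F_def eta_def using l2 jn by simp
    ultimately have "concat ws1 = concat ws2" using eq by simp
    then show "ws1 = ws2" using code w1 w2 unfolding seqs_def by blast
  qed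
  moreover have "F ` seqs ?R j \<subseteq> infixes (quasiperiodic_words X q) \<inter> words_of_len X n"
  proof
    fix w assume "w \<in> F ` seqs ?R j"
    then obtain ws where ws: "ws \<in> seqs ?R j" and w: "w = F ws" by blast
    have sP: "set (ws @ replicate n q) \<subseteq> P_set q"
      using ws R_sub_P q_in_P[OF qn] unfolding seqs_def by auto
    have cl: "concat (ws @ replicate n q) @ q \<in> lists X"
    proof -
      have "\<forall>v\<in>set (ws @ replicate n q). v \<in> lists X" using sP P_lists[OF X] by blast
      then have "concat (ws @ replicate n q) \<in> lists X" unfolding lists_eq_set by auto
      then show ?thesis using X by simp
    qed
    have Q: "eta ws \<in> quasiperiodic_words X q"
      unfolding eta_def using Q_intro[OF sP cl] .
    have len: "n \<le> length (eta ws)"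
    proof -
      have "length (concat (replicate n q)) = n * length q" by (simp add: length_concat sum_list_replicate)
      moreover have "n * 1 \<le> n * length q" using qn by (intro mult_le_mono2) (cases q, auto)
      moreover have "length (eta ws) = length (concat ws) + length (concat (replicate n q)) + length q"
        unfolding eta_def by simp
      ultimately show ?thesis by linarith
    qed
    have "w \<in> infixes (quasiperiodic_words X q)"
      unfolding infixes_def w F_def using Q by (auto intro!: bexI[of _ "eta ws"] prefix_imp_sublist take_is_prefix)
    moreover have "w \<in> words_of_len X n"
      unfolding words_of_len_def w F_def using len cl unfolding eta_def
      by (auto dest: in_set_takeD)
    ultimately show "w \<in> infixes (quasiperiodic_words X q) \<inter> words_of_len X n" by blast
  qed
  ultimately show ?thesis
    using card_inj_on_le finB finite_subset by (metis inf_le2 finite_Int)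
qed




lemma occ_of_prefix: "prefix (u @ q) \<eta> \<Longrightarrow> prefix q (drop (length u) \<eta>) \<and> take (length u) \<eta> = u"
  by (auto simp: prefix_def)

lemma cover_part:
  assumes Q: "\<eta> \<in> quasiperiodic_words X q" and qn: "q \<noteq> []"
    and eta: "\<eta> = ps @ w @ ss" and n1: "1 \<le> length w"
  shows "\<exists>d x. d < length q \<and> x \<in> lang_star (star_root (P_set q)) \<and>
     length w \<le> length x + length q \<and> length x < length w + length q \<and> w = take (length w) (drop d (x @ q))"
proof -
  let ?m = "length q"
  define n where "n = length w"
  define A where "A = length ps"
  have QP: "QP q \<eta>" using QP_of[OF Q] .
  have wA: "w = take n (drop A \<eta>)" unfolding eta A_def n_def by simp
  have lenA: "A + n \<le> length \<eta>" unfolding eta A_def n_def by simp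
  have "A < length \<eta>" using lenA n1 unfolding n_def by linarith
  then obtain u1 where u1: "A < length u1 + ?m" "length u1 \<le> A" "prefix (u1 @ q) \<eta>"
    using QP unfolding QP_def by blast
  have "A + n - 1 < length \<eta>" using lenA n1 unfolding n_def by linarith
  then obtain u2 where u2: "A + n - 1 < length u2 + ?m" "length u2 \<le> A + n - 1" "prefix (u2 @ q) \<eta>"
    using QP unfolding QP_def by blast
  define p1 where "p1 = length u1"
  define p2 where "p2 = length u2"
  define pa where "pa = min p1 p2"
  have o1: "prefix q (drop p1 \<eta>)" using occ_of_prefix[OF u1(3)] unfolding p1_def by blast
  have o2: "prefix q (drop p2 \<eta>)" and t2: "take p2 \<eta> = u2"
    using occ_of_prefix[OF u2(3)] unfolding p2_def by blast+
  have oa: "prefix q (drop pa \<eta>)" unfolding pa_def using o1 o2 by (simp add: min_def)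
  have pa_le: "pa \<le> p2" "pa \<le> A" unfolding pa_def using u1 unfolding p1_def by auto
  have pa_A: "A < pa + ?m" unfolding pa_def p1_def p2_def using u1 u2 n1 unfolding n_def by auto
  define x where "x = drop pa (take p2 \<eta>)"
  have xP: "x \<in> lang_star (P_set q)" unfolding x_def
    by (rule chain[OF QP oa o2 pa_le(1) qn])
  have xR: "x \<in> lang_star (star_root (P_set q))" using xP Pstar_sub_Rstar by blast
  have lp2: "p2 + ?m \<le> length \<eta>" using prefix_length_le[OF u2(3)] unfolding p2_def by simp
  have lx: "length x = p2 - pa" unfolding x_def using lp2 by simp
  have tq: "take (p2 + ?m) \<eta> = u2 @ q"
    using u2(3) unfolding p2_def by (auto simp: prefix_def)
  have xq: "x @ q = drop pa (take (p2 + ?m) \<eta>)"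
    unfolding tq x_def t2[symmetric] using pa_le(1) lp2 by simp
  have "take n (drop (A - pa) (x @ q)) = take n (drop A (take (p2 + ?m) \<eta>))"
    unfolding xq using pa_le(2) by simp
  also have "\<dots> = take n (drop A \<eta>)"
  proof -
    have "A + n \<le> p2 + ?m" using u2(1) n1 unfolding p2_def n_def by linarith
    then show ?thesis by (simp add: take_drop min_def)
  qed
  finally have weq: "w = take n (drop (A - pa) (x @ q))" using wA by simp
  show ?thesis
  proof (intro exI conjI)
    show "A - pa < ?m" using pa_A pa_le by linarith
    show "x \<in> lang_star (star_root (P_set q))" by (rule xR)
    show "length w \<le> length x + ?m" using lx u2(1) pa_le unfolding p2_def n_def by linarith
    show "length x < length w + ?m" using lx u2(2) pa_A pa_le n1 unfolding p2_def n_def by linarith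
    show "w = take (length w) (drop (A - pa) (x @ q))" using weq unfolding n_def .
  qed
qed




lemma upper_part:
  assumes qn: "q \<noteq> []" and n1: "1 \<le> n"
  shows "card (infixes (quasiperiodic_words X q) \<inter> words_of_len X n)
     \<le> length q * (\<Sum>L\<in>{n - length q..<n + length q}. card (seqs (star_root (P_set q)) L))"
proof -
  let ?m = "length q"
  let ?R = "star_root (P_set q)"
  let ?B = "infixes (quasiperiodic_words X q) \<inter> words_of_len X n"
  define W where "W = {x \<in> lang_star ?R. n \<le> length x + ?m \<and> length x < n + ?m}"
  define G where "G p = take n (drop (fst p) (snd p @ q))" for p :: "nat \<times> 'a list"
  have Rne: "\<forall>v\<in>?R. v \<noteq> []" using R_props by blast
  have BG: "?B \<subseteq> G ` ({..<?m} \<times> W)"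
  proof
    fix w assume w: "w \<in> ?B"
    then obtain \<eta> where Q: "\<eta> \<in> quasiperiodic_words X q" and sw: "sublist w \<eta>"
      unfolding infixes_def by blast
    then obtain ps ss where eta: "\<eta> = ps @ w @ ss" unfolding sublist_def by blast
    have lw: "length w = n" using w unfolding words_of_len_def by simp
    obtain d x where dx: "d < ?m" "x \<in> lang_star ?R" "length w \<le> length x + ?m"
      "length x < length w + ?m" "w = take (length w) (drop d (x @ q))"
      using cover_part[OF Q qn eta] n1 lw by auto
    show "w \<in> G ` ({..<?m} \<times> W)"
      using dx lw unfolding G_def W_def by (intro image_eqI[of _ _ "(d, x)"]) auto
  qed
  have WU: "W \<subseteq> (\<Union>L\<in>{n - ?m..<n + ?m}. concat ` seqs ?R L)"
  proof
    fix x assume "x \<in> W"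
    then obtain ws where ws: "set ws \<subseteq> ?R" "x = concat ws" and lx: "n \<le> length x + ?m" "length x < n + ?m"
      unfolding W_def lang_star_def by auto
    have "ws \<in> seqs ?R (length x)" unfolding seqs_def using ws by (simp add: length_concat)
    moreover have "length x \<in> {n - ?m..<n + ?m}" using lx by auto
    ultimately show "x \<in> (\<Union>L\<in>{n - ?m..<n + ?m}. concat ` seqs ?R L)" using ws by blast
  qed
  have finU: "finite (\<Union>L\<in>{n - ?m..<n + ?m}. concat ` seqs ?R L)"
    using seqs_finite[OF R_finite Rne] by auto
  have finW: "finite W" using WU finU finite_subset by blast
  have "card W \<le> card (\<Union>L\<in>{n - ?m..<n + ?m}. concat ` seqs ?R L)"
    using WU finU by (rule card_mono[rotated])
  also have "\<dots> \<le> (\<Sum>L\<in>{n - ?m..<n + ?m}. card (concat ` seqs ?R L))"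
    by (rule card_UN_le) simp
  also have "\<dots> \<le> (\<Sum>L\<in>{n - ?m..<n + ?m}. card (seqs ?R L))"
    by (intro sum_mono card_image_le seqs_finite[OF R_finite Rne])
  finally have cW: "card W \<le> (\<Sum>L\<in>{n - ?m..<n + ?m}. card (seqs ?R L))" .
  have "card ?B \<le> card (G ` ({..<?m} \<times> W))"
    using BG finW by (intro card_mono) auto
  also have "\<dots> \<le> card ({..<?m} \<times> W)" by (rule card_image_le) (use finW in auto)
  also have "\<dots> = ?m * card W" by (simp add: card_cartesian_product)
  also have "\<dots> \<le> ?m * (\<Sum>L\<in>{n - ?m..<n + ?m}. card (seqs ?R L))" using cW by simp
  finally show ?thesis .
qed




theorem lemma3:
  fixes X :: "'a set" and q :: "'a list" and lam :: real
  assumes "finite X" and "2 \<le> card X"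
    and "q \<in> lists X" and "q \<noteq> []"
    and "lam > 0" and "poly (char_poly q) lam = 0"
    and "\<forall>t>0. poly (char_poly q) t = 0 \<longrightarrow> t \<le> lam"
  shows "\<exists>c1 c2. c1 > 0 \<and> c2 > 0 \<and> (\<forall>n::nat.
           c1 * lam ^ n \<le> real (card (infixes (quasiperiodic_words X q) \<inter> words_of_len X n)) \<and>
           real (card (infixes (quasiperiodic_words X q) \<inter> words_of_len X n)) \<le> c2 * lam ^ n)"
proof -
  note fin = assms(1) and Xq = assms(3) and qn = assms(4) and lamp = assms(5)
  define m where "m = length q"
  define R where "R = star_root (P_set q)"
  define mu where "mu = 1 / lam"
  define a where "a L = real (card (seqs R L))" for L
  define b where "b n = real (card (infixes (quasiperiodic_words X q) \<inter> words_of_len X n))" for n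
  have m1: "1 \<le> m" unfolding m_def using qn by (cases q) auto
  have Rne: "\<forall>v\<in>R. v \<noteq> []" unfolding R_def using R_props by blast
  have musum: "(\<Sum>v\<in>R. mu ^ length v) = 1"
    unfolding R_def mu_def using poly_part[OF assms(6) lamp] .
  interpret renewal R length m mu a
  proof
    show "finite R" unfolding R_def by (rule R_finite)
    show "\<And>v. v \<in> R \<Longrightarrow> 1 \<le> length v" using Rne by (auto simp: Suc_le_eq)
    show "\<And>v. v \<in> R \<Longrightarrow> length v \<le> m" unfolding R_def m_def using R_props by blast
    show "0 < mu" unfolding mu_def using lamp by simp
    show "(\<Sum>v\<in>R. mu ^ length v) = 1" by (rule musum)
    show "a 0 = 1" unfolding a_def using seqs_0[OF Rne] by simp
    show "\<And>n. a (Suc n) = (\<Sum>v\<in>R. if length v \<le> Suc n then a (Suc n - length v) else 0)"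
      unfolding a_def R_def by (rule card_seqs_Suc[OF R_finite Rne[unfolded R_def]])
    show "\<And>n. 0 \<le> a n" unfolding a_def by simp
  qed
  have lam1: "1 \<le> lam"
  proof -
    have "R \<noteq> {}" using musum by auto
    then obtain v where v: "v \<in> R" by blast
    have "mu ^ length v \<le> 1"
      using musum member_le_sum[OF v, of "\<lambda>v. mu ^ length v"] mupos finR by simp
    moreover have "0 < length v" using Rne v by simp
    ultimately have "mu \<le> 1" using mupos by (meson not_le one_less_power)
    then show ?thesis unfolding mu_def using lamp by (simp add: divide_le_eq)
  qed
  have mulam: "mu ^ k * lam ^ k = 1" for k unfolding mu_def using lamp by (simp add: power_one_over)
  have a_le: "a L \<le> lam ^ L" for L
  proof -
    have "a L * mu ^ L \<le> 1" by (rule a_upper)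
    then have "a L * mu ^ L * lam ^ L \<le> lam ^ L" using lamp by (simp add: mult_right_le_one_le)
    then show ?thesis using mulam[of L] by (simp add: mult.assoc)
  qed
  define c1 where "c1 = mu ^ m / m"
  define c2 where "c2 = 2 * real m * real m * lam ^ m + 1"
  have lower: "c1 * lam ^ n \<le> b n" for n
  proof -
    obtain j where j: "j \<le> n" "n < j + m" "1 / real m \<le> a j * mu ^ j"
      using a_lower[OF m1] by blast
    have "lam ^ n \<le> lam ^ (j + m)" using lam1 j by (intro power_increasing) auto
    then have "mu ^ m * lam ^ n \<le> mu ^ m * lam ^ (j + m)" using mupos by simp
    also have "\<dots> = lam ^ j" using mulam[of m] by (simp add: power_add algebra_simps)
    finally have h1: "mu ^ m * lam ^ n \<le> lam ^ j" .
    have "lam ^ j / real m \<le> a j"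
    proof -
      have "1 / real m * lam ^ j \<le> a j * mu ^ j * lam ^ j" using mult_right_mono[OF j(3), of "lam ^ j"] lamp by simp
      also have "\<dots> = a j" using mulam[of j] by (simp add: mult.assoc)
      finally show ?thesis by simp
    qed
    moreover have "a j \<le> b n" unfolding a_def b_def R_def using lower_part[OF Xq qn j(1) fin] by simp
    moreover have "c1 * lam ^ n \<le> lam ^ j / real m" unfolding c1_def using h1 m1
      by (simp add: divide_right_mono)
    ultimately show ?thesis by linarith
  qed
  have upper: "b n \<le> c2 * lam ^ n" for n
  proof (cases "n = 0")
    case True
    have "infixes (quasiperiodic_words X q) \<inter> words_of_len X 0 \<subseteq> {[]}"
      unfolding words_of_len_def by auto
    then have "card (infixes (quasiperiodic_words X q) \<inter> words_of_len X 0) \<le> 1"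
    proof -
      assume "infixes (quasiperiodic_words X q) \<inter> words_of_len X 0 \<subseteq> {[]}"
      then have "card (infixes (quasiperiodic_words X q) \<inter> words_of_len X 0) \<le> card {[] :: 'a list}"
        by (intro card_mono) auto
      then show ?thesis by simp
    qed
    moreover have "1 \<le> c2" unfolding c2_def using lamp by simp
    ultimately show ?thesis unfolding b_def using True by simp
  next
    case False
    then have n1: "1 \<le> n" by simp
    have "b n \<le> real m * (\<Sum>L\<in>{n - m..<n + m}. a L)"
      unfolding b_def a_def m_def R_def using upper_part[OF qn n1, of X]
      by (simp flip: of_nat_sum of_nat_mult)
    also have "\<dots> \<le> real m * (\<Sum>L\<in>{n - m..<n + m}. lam ^ (n + m))"
    proof (intro mult_left_mono sum_mono)
      fix L assume "L \<in> {n - m..<n + m}"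
      then have "L \<le> n + m" by simp
      then have "lam ^ L \<le> lam ^ (n + m)" using lam1 by (intro power_increasing)
      then show "a L \<le> lam ^ (n + m)" using a_le[of L] by linarith
    qed simp
    also have "\<dots> = real m * (real (card {n - m..<n + m}) * lam ^ (n + m))" by simp
    also have "\<dots> \<le> real m * (2 * real m * lam ^ (n + m))"
    proof -
      have "card {n - m..<n + m} \<le> 2 * m" by simp
      then have "real (card {n - m..<n + m}) \<le> 2 * real m" by linarith
      then show ?thesis using lamp by (intro mult_left_mono mult_right_mono) auto
    qed
    also have "\<dots> = (2 * real m * real m * lam ^ m) * lam ^ n" by (simp add: power_add algebra_simps)
    also have "\<dots> \<le> c2 * lam ^ n" unfolding c2_def using lamp by (simp add: distrib_right)
    finally show ?thesis .
  qed
  show ?thesis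
  proof (intro exI conjI allI)
    show "0 < c1" unfolding c1_def using mupos m1 by simp
    have "0 \<le> 2 * real m * real m * lam ^ m" using lamp by simp
    then show "0 < c2" unfolding c2_def by linarith
    fix n
    show "c1 * lam ^ n \<le> real (card (infixes (quasiperiodic_words X q) \<inter> words_of_len X n))"
      using lower[of n] unfolding b_def .
    show "real (card (infixes (quasiperiodic_words X q) \<inter> words_of_len X n)) \<le> c2 * lam ^ n"
      using upper[of n] unfolding b_def .
  qed
qed



end
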